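(* Let $a>0$, $\epsilon>0$, $n\in\mathbb{N}$, $\sigma_n=n^{-a}$, and consider the pendulum Lagrangian $A_n(q_1,\dot q_1)=\frac12|\dot q_1|^2+\sigma_n(1-\cos q_1)$ on $\mathbb{R}$ with associated Hamiltonian $h_n(q_1,p_1)=\frac12|p_1|^2-\sigma_n(1-\cos q_1)$. Let $t_0<\bar t_1$ and let $\bar q_1$ be the solution of the Euler–Lagrange equation of $A_n$ on $(t_0,\bar t_1)$ satisfying $\bar q_1(t_0)=0$, $\bar q_1(\bar t_1)=\pi$. Let $e(\bar t_1-t_0)$ denote its energy, i.e. $(\bar q_1,\bar p_1)\in h_n^{-1}(e(\bar t_1-t_0))$ with $\bar p_1=\dot{\bar q}_1$, and let $\omega_1=\pi/(\bar t_1-t_0)$ be the average speed of $\bar q_1$ on $(t_0,\bar t_1)$. If $|\omega_1|<n^{-\frac a2-\epsilon}$, then $$e(\bar t_1-t_0)\sim \sigma_n\exp\Big(-\frac{C\sqrt{\sigma_n}}{|\omega_1|}\Big),$$ where $C$ is a positive constant.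
   Context: The notation $f\sim g$ means $\frac1{C'}g<f<C'g$ for some constant $C'>1$ independent of $n$. *)

theory Defs
  imports Complex_Main
begin

definition sigma_n :: "real \<Rightarrow> nat \<Rightarrow> real" where
  "sigma_n a n = real n powr (-a)"

definition pendulum_hamiltonian :: "real \<Rightarrow> real \<Rightarrow> real \<Rightarrow> real" where
  "pendulum_hamiltonian \<sigma> q p = (1/2) * p^2 - \<sigma> * (1 - cos q)"

text \<open>q solves the Euler-Lagrange equation of A(q,v) = v^2/2 + sigma (1 - cos q),
  i.e. q'' = sigma sin q, on the open interval (t0,t1), with velocity qd = q';
  q is continuous on the closed interval.\<close>
definition pendulum_EL_solution ::
  "real \<Rightarrow> (real \<Rightarrow> real) \<Rightarrow> (real \<Rightarrow> real) \<Rightarrow> real \<Rightarrow> real \<Rightarrow> bool" where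
  "pendulum_EL_solution \<sigma> q qd t0 t1 \<longleftrightarrow>
     continuous_on {t0..t1} q \<and>
     (\<forall>t\<in>{t0<..<t1}. (q has_real_derivative qd t) (at t) \<and>
                       (qd has_real_derivative \<sigma> * sin (q t)) (at t))"

end

theory Submission
  imports Defs "HOL-Analysis.Complex_Transcendental"
begin

lemma one_minus_cos_le: "2 * (1 - cos x) \<le> (x::real)^2"
proof -
  have "cos x = 1 - 2 * (sin (x/2))^2" using cos_double_sin[of "x/2"] by simp
  moreover have "(sin (x/2))^2 \<le> (x/2)^2"
    using abs_sin_x_le_abs_x[of "x/2"] by (metis abs_ge_zero power2_abs power_mono)
  ultimately show ?thesis by (simp add: power_divide)
qed

lemma aux_f3: assumes "(x::real) \<ge> 0" shows "x - x^3/6 - sin x \<le> 0"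
proof -
  have "(\<lambda>x. -(x - x^3/6 - sin x)) 0 \<le> (\<lambda>x. -(x - x^3/6 - sin x)) x"
  proof (rule DERIV_nonneg_imp_nondecreasing[OF assms])
    fix u :: real assume u: "0 \<le> u" "u \<le> x"
    have "1 - u^2/2 \<le> cos u" using one_minus_cos_le[of u] by simp
    then show "\<exists>y. ((\<lambda>x. -(x - x^3/6 - sin x)) has_real_derivative y) (at u) \<and> 0 \<le> y"
      by (intro exI[of _ "-(1 - u^2/2 - cos u)"]) (auto intro!: derivative_eq_intros simp: field_simps power2_eq_square)
  qed
  then show ?thesis by simp
qed

lemma cos_upper4: assumes "(x::real) \<ge> 0" shows "cos x \<le> 1 - x^2/2 + x^4/24"
proof -
  have "(\<lambda>x. 1 - x^2/2 + x^4/24 - cos x) 0 \<le> (\<lambda>x. 1 - x^2/2 + x^4/24 - cos x) x"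
  proof (rule DERIV_nonneg_imp_nondecreasing[OF assms])
    fix u :: real assume u: "0 \<le> u" "u \<le> x"
    have "u - u^3/6 - sin u \<le> 0" using aux_f3 u by simp
    then show "\<exists>y. ((\<lambda>x. 1 - x^2/2 + x^4/24 - cos x) has_real_derivative y) (at u) \<and> 0 \<le> y"
      by (intro exI[of _ "-u + u^3/6 + sin u"]) (auto intro!: derivative_eq_intros simp: field_simps power2_eq_square power3_eq_cube)
  qed
  then show ?thesis by simp
qed

lemma time_upper:
  fixes q qd G g :: "real \<Rightarrow> real"
  assumes "t0 < t1" "continuous_on {t0..t1} q"
    and dq: "\<And>t. t0 < t \<Longrightarrow> t < t1 \<Longrightarrow> (q has_real_derivative qd t) (at t)"
    and dG: "\<And>x. (G has_real_derivative g x) (at x)"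
    and ineq: "\<And>t. t0 < t \<Longrightarrow> t < t1 \<Longrightarrow> g (q t) * qd t \<ge> 1"
  shows "t1 - t0 \<le> G (q t1) - G (q t0)"
proof -
  have cG: "continuous_on UNIV G"
    using dG by (meson DERIV_isCont continuous_at_imp_continuous_on)
  have "(\<lambda>t. G (q t) - t) t0 \<le> (\<lambda>t. G (q t) - t) t1"
  proof (rule DERIV_nonneg_imp_increasing_open[where f="\<lambda>t. G (q t) - t"])
    show "continuous_on {t0..t1} (\<lambda>t. G (q t) - t)"
      proof -
      have "continuous_on {t0..t1} (\<lambda>t. G (q t))"
        using continuous_on_compose2[OF cG assms(2)] by auto
      then show ?thesis by (intro continuous_intros)
    qed
    fix t assume t: "t0 < t" "t < t1"
    have "((\<lambda>t. G (q t) - t) has_real_derivative g (q t) * qd t - 1) (at t)"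
      using DERIV_diff[OF DERIV_chain2[OF dG dq[OF t]] DERIV_ident] by simp
    then show "\<exists>y. ((\<lambda>t. G (q t) - t) has_real_derivative y) (at t) \<and> 0 \<le> y"
      using ineq[OF t] by force
  qed (use assms in auto)
  then show ?thesis by simp
qed

lemma time_lower:
  fixes q qd G g :: "real \<Rightarrow> real"
  assumes "t0 < t1" "continuous_on {t0..t1} q"
    and dq: "\<And>t. t0 < t \<Longrightarrow> t < t1 \<Longrightarrow> (q has_real_derivative qd t) (at t)"
    and dG: "\<And>x. (G has_real_derivative g x) (at x)"
    and ineq: "\<And>t. t0 < t \<Longrightarrow> t < t1 \<Longrightarrow> g (q t) * qd t \<le> 1"
  shows "G (q t1) - G (q t0) \<le> t1 - t0"
proof -
  have cG: "continuous_on UNIV G"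
    using dG by (meson DERIV_isCont continuous_at_imp_continuous_on)
  have "(\<lambda>t. t - G (q t)) t0 \<le> (\<lambda>t. t - G (q t)) t1"
  proof (rule DERIV_nonneg_imp_increasing_open[where f="\<lambda>t. t - G (q t)"])
    show "continuous_on {t0..t1} (\<lambda>t. t - G (q t))"
      proof -
      have "continuous_on {t0..t1} (\<lambda>t. G (q t))"
        using continuous_on_compose2[OF cG assms(2)] by auto
      then show ?thesis by (intro continuous_intros)
    qed
    fix t assume t: "t0 < t" "t < t1"
    have "((\<lambda>t. t - G (q t)) has_real_derivative 1 - g (q t) * qd t) (at t)"
      using DERIV_diff[OF DERIV_ident DERIV_chain2[OF dG dq[OF t]]] by simp
    then show "\<exists>y. ((\<lambda>t. t - G (q t)) has_real_derivative y) (at t) \<and> 0 \<le> y"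
      using ineq[OF t] by force
  qed (use assms in auto)
  then show ?thesis by simp
qed

lemma alg_lower:
  fixes e \<sigma> p x :: real
  assumes "e > 0" "\<sigma> > 0" "p > 0" "p^2 \<le> 2*e + \<sigma>*x^2"
  shows "sqrt \<sigma> / sqrt (2*e) / (sqrt \<sigma> * sqrt ((sqrt \<sigma> / sqrt (2*e) * x)^2 + 1)) * p \<le> 1"
proof -
  have A: "(sqrt \<sigma> / sqrt (2*e) * x)^2 + 1 = (2*e + \<sigma>*x^2) / (2*e)"
    using assms by (simp add: power_mult_distrib power_divide field_simps)
  have "sqrt ((sqrt \<sigma> / sqrt (2*e) * x)^2 + 1) = sqrt (2*e + \<sigma>*x^2) / sqrt (2*e)"
    unfolding A by (simp add: real_sqrt_divide)
  moreover have "p \<le> sqrt (2*e + \<sigma>*x^2)"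
    using assms real_le_rsqrt by blast
  moreover have "sqrt (2*e + \<sigma>*x^2) > 0" using assms
    by (metis add_pos_nonneg mult_nonneg_nonneg less_eq_real_def mult_pos_pos real_sqrt_gt_0_iff zero_le_power2 zero_less_numeral)
  ultimately show ?thesis using assms by (simp add: field_simps)
qed

lemma alg_upper:
  fixes e \<sigma> p x :: real
  assumes "e > 0" "\<sigma> > 0" "p > 0" "0 \<le> x" "x \<le> pi"
    and pp: "p^2 \<ge> 2*e + \<sigma>*x^2 - \<sigma>*x^4/12"
  shows "(sqrt \<sigma> / sqrt (2*e) / sqrt ((sqrt \<sigma> / sqrt (2*e) * x)^2 + 1) + x/6) / sqrt \<sigma> * p \<ge> 1"
proof -
  define A where "A = 2*e + \<sigma>*x^2"
  have Apos: "A > 0" unfolding A_def using assms by (simp add: add_pos_nonneg)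
  have A: "(sqrt \<sigma> / sqrt (2*e) * x)^2 + 1 = A / (2*e)"
    using assms by (simp add: A_def power_mult_distrib power_divide field_simps)
  have sA: "sqrt ((sqrt \<sigma> / sqrt (2*e) * x)^2 + 1) = sqrt A / sqrt (2*e)"
    unfolding A by (simp add: real_sqrt_divide)
  have "(sqrt \<sigma> / sqrt (2*e) / sqrt ((sqrt \<sigma> / sqrt (2*e) * x)^2 + 1) + x/6) / sqrt \<sigma> * p
      = p / sqrt A + p * x / (6 * sqrt \<sigma>)"
    unfolding sA using assms Apos by (simp add: field_simps)
  define d where "d = x^2/12"
  have pi2: "pi^2 \<le> 10" proof -
    have "pi * pi \<le> 3.1416 * 3.1416" using pi_approx(2) by (intro mult_mono) auto
    then show ?thesis by (simp add: power2_eq_square)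
  qed
  have d0: "0 \<le> d" "d \<le> 10/12" unfolding d_def using assms pi2
    by (auto intro!: order.trans[OF power_mono[of x pi 2]])
  have "\<sigma>*x^4/12 \<le> A * d" unfolding A_def d_def using assms
    by (simp add: field_simps power2_eq_square power4_eq_xxxx)
  then have p2: "p^2 \<ge> A * (1 - d)" using pp unfolding A_def by (simp add: algebra_simps)
  have dd: "(1 - d) * (1 + 2*d)^2 \<ge> 1"
  proof -
    have "d^2 \<le> (10/12)^2" using d0 by (intro power_mono) auto
    then have "4*d^2 \<le> 3" by (simp add: power_divide)
    then have "1 + 3*d - 4*d^3 \<ge> 1" proof -
      have "d * (4*d^2) \<le> d * 3" using d0 \<open>4*d^2 \<le> 3\<close> by (intro mult_left_mono) auto
      then show ?thesis by (simp add: power2_eq_square power3_eq_cube algebra_simps)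
    qed
    then show ?thesis by (simp add: power2_eq_square power3_eq_cube algebra_simps)
  qed
  have "(p * (1 + 2*d))^2 \<ge> A"
  proof -
    have "(p * (1 + 2*d))^2 = p^2 * (1+2*d)^2" by (simp add: power_mult_distrib)
    also have "\<dots> \<ge> A * (1 - d) * (1+2*d)^2" using p2 by (intro mult_right_mono) auto
    finally show ?thesis using dd Apos
    proof -
      have "A * 1 \<le> A * ((1 - d) * (1+2*d)^2)" using dd Apos by (intro mult_left_mono) auto
      then show ?thesis using \<open>A * (1 - d) * (1+2*d)^2 \<le> _\<close> \<open>(p * (1 + 2*d))^2 = _\<close> by (simp add: mult.assoc)
    qed
  qed
  then have k1: "p * (1 + 2*d) \<ge> sqrt A"
    using assms d0 by (intro real_le_lsqrt) auto
  have "sqrt A \<ge> sqrt \<sigma> * x"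
  proof -
    have "sqrt \<sigma> * x = sqrt (\<sigma> * x^2)" using assms by (simp add: real_sqrt_mult)
    also have "\<dots> \<le> sqrt A" unfolding A_def using assms by (intro real_sqrt_le_mono) auto
    finally show ?thesis .
  qed
  then have "p * x^2 / (6 * sqrt A) \<le> p * x / (6 * sqrt \<sigma>)"
    using assms Apos by (simp add: field_simps power2_eq_square mult_left_mono)
  moreover have "p / sqrt A + p * x^2 / (6 * sqrt A) \<ge> 1"
    using k1 Apos unfolding d_def by (simp add: field_simps)
  ultimately show ?thesis
    using \<open>_ = p / sqrt A + p * x / (6 * sqrt \<sigma>)\<close> by linarith
qed

lemma core:
  fixes \<sigma> t0 t1 :: real and q qd :: "real \<Rightarrow> real"
  assumes \<sigma>: "\<sigma> > 0" and T: "t0 < t1" and EL: "pendulum_EL_solution \<sigma> q qd t0 t1"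
    and q0: "q t0 = 0" and q1: "q t1 = pi" and slow: "pi < sqrt \<sigma> * (t1 - t0)"
    and t: "t \<in> {t0<..<t1}"
  shows "2*pi^2 * \<sigma> * exp (-2 * sqrt \<sigma> * (t1-t0)) \<le> pendulum_hamiltonian \<sigma> (q t) (qd t)
     \<and> pendulum_hamiltonian \<sigma> (q t) (qd t) \<le> (9*pi^2/2)*exp (pi^2/6) * \<sigma> * exp (-2 * sqrt \<sigma> * (t1-t0))"
proof -
  have cont: "continuous_on {t0..t1} q"
    and dq: "\<And>s. t0 < s \<Longrightarrow> s < t1 \<Longrightarrow> (q has_real_derivative qd s) (at s)"
    and dqd: "\<And>s. t0 < s \<Longrightarrow> s < t1 \<Longrightarrow> (qd has_real_derivative \<sigma> * sin (q s)) (at s)"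
    using EL unfolding pendulum_EL_solution_def by auto
  define H where "H s = pendulum_hamiltonian \<sigma> (q s) (qd s)" for s
  define e where "e = H t"
  have dH: "(H has_real_derivative 0) (at s)" if s: "t0 < s" "s < t1" for s
  proof -
    have "(H has_real_derivative (1/2) * (2 * qd s * (\<sigma> * sin (q s))) - \<sigma> * (sin (q s) * qd s)) (at s)"
      unfolding H_def[abs_def] pendulum_hamiltonian_def
      by (auto intro!: derivative_eq_intros dq[OF s] dqd[OF s])
    then show ?thesis by (simp add: algebra_simps)
  qed
  have Hc: "H s = e" if "s \<in> {t0<..<t1}" for s
    unfolding e_def using DERIV_isconst3[OF T that t] dH by auto
  have en: "(qd s)^2 = 2*e + 2*\<sigma>*(1 - cos (q s))" if "t0 < s" "s < t1" for s
    using Hc[of s] that unfolding H_def pendulum_hamiltonian_def by (auto simp: algebra_simps)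
  have epos: "e > 0"
  proof (rule ccontr)
    assume "\<not> e > 0"
    then have e0: "e \<le> 0" by simp
    define W where "W s = (q s)^2 * exp (-2 * sqrt \<sigma> * (s - t0))" for s
    have "(\<lambda>s. - W s) t0 \<le> (\<lambda>s. - W s) t1"
    proof (rule DERIV_nonneg_imp_increasing_open[where f="\<lambda>s. - W s"])
      show "t0 \<le> t1" using T by simp
      show "continuous_on {t0..t1} (\<lambda>s. - W s)"
        unfolding W_def by (intro continuous_intros cont)
      fix s assume s: "t0 < s" "s < t1"
      have "(qd s)^2 \<le> \<sigma> * (q s)^2"
        proof -
          have "\<sigma> * (2 * (1 - cos (q s))) \<le> \<sigma> * (q s)^2"
            using one_minus_cos_le[of "q s"] \<sigma> by (intro mult_left_mono) auto
          then show ?thesis using en[OF s] e0 by (simp add: algebra_simps)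
        qed
      then have "sqrt ((qd s)^2) \<le> sqrt (\<sigma> * (q s)^2)" by (rule real_sqrt_le_mono)
      then have "\<bar>qd s\<bar> \<le> sqrt \<sigma> * \<bar>q s\<bar>" by (simp add: real_sqrt_mult)
      then have "\<bar>q s\<bar> * \<bar>qd s\<bar> \<le> \<bar>q s\<bar> * (sqrt \<sigma> * \<bar>q s\<bar>)" by (intro mult_left_mono) auto
      then have qq: "q s * qd s \<le> sqrt \<sigma> * (q s)^2"
      proof -
        have "q s * qd s \<le> \<bar>q s * qd s\<bar>" by (rule abs_ge_self)
        also have "\<dots> = \<bar>q s\<bar> * \<bar>qd s\<bar>" by (rule abs_mult)
        also have "\<dots> \<le> \<bar>q s\<bar> * (sqrt \<sigma> * \<bar>q s\<bar>)" by fact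
        also have "\<dots> = sqrt \<sigma> * (q s)^2" by (simp add: power2_eq_square abs_mult_self_eq algebra_simps)
        finally show ?thesis .
      qed
      have "((\<lambda>s. - W s) has_real_derivative
          - (2 * q s * qd s * exp (-2 * sqrt \<sigma> * (s - t0)) + (q s)^2 * (exp (-2 * sqrt \<sigma> * (s - t0)) * (-2 * sqrt \<sigma>)))) (at s)"
        unfolding W_def by (auto intro!: derivative_eq_intros dq[OF s] simp: algebra_simps)
      moreover have "0 \<le> - (2 * q s * qd s * exp (-2 * sqrt \<sigma> * (s - t0)) + (q s)^2 * (exp (-2 * sqrt \<sigma> * (s - t0)) * (-2 * sqrt \<sigma>)))"
      proof -
        have "(q s * qd s) * exp (-2 * sqrt \<sigma> * (s - t0)) \<le> (sqrt \<sigma> * (q s)^2) * exp (-2 * sqrt \<sigma> * (s - t0))"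
          using qq by (intro mult_right_mono) auto
        then show ?thesis by (simp add: algebra_simps)
      qed
      ultimately show "\<exists>y. ((\<lambda>s. - W s) has_real_derivative y) (at s) \<and> 0 \<le> y" by blast
    qed
    moreover have "W t0 = 0" unfolding W_def q0 by simp
    moreover have "W t1 > 0" unfolding W_def q1 by simp
    ultimately show False by simp
  qed
  have pne: "qd s \<noteq> 0" if "t0 < s" "s < t1" for s
  proof -
    have "(qd s)^2 \<ge> 2*e" using en[OF that] \<sigma> by (simp add: mult_nonneg_nonneg)
    then show ?thesis using epos by auto
  qed
  have cqd: "isCont qd s" if "t0 < s" "s < t1" for s
    using dqd[OF that] by (rule DERIV_isCont)
  obtain l z where z: "t0 < z" "z < t1" "(q has_real_derivative l) (at z)" "q t1 - q t0 = (t1 - t0) * l"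
    using MVT[OF T cont] dq real_differentiable_def by blast
  have "l = qd z" using DERIV_unique[OF z(3) dq[OF z(1,2)]] .
  then have qdz: "qd z > 0" proof -
    have "0 < (t1 - t0) * qd z" using z(4) q0 q1 \<open>l = qd z\<close> by simp
    then show ?thesis using T zero_less_mult_pos[of "t1 - t0" "qd z"] by simp
  qed
  have ppos: "qd s > 0" if s: "t0 < s" "s < t1" for s
  proof (rule ccontr)
    assume "\<not> qd s > 0"
    then have neg: "qd s < 0" using pne[OF s] by simp
    show False
    proof (cases "s \<le> z")
      case True
      then obtain x where "s \<le> x" "x \<le> z" "qd x = 0"
        using IVT[of qd s 0 z] neg qdz cqd s z by fastforce
      then show False using pne[of x] s z by auto
    next
      case False
      then obtain x where "z \<le> x" "x \<le> s" "qd x = 0"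
        using IVT2[of qd s 0 z] neg qdz cqd s z by fastforce
      then show False using pne[of x] s z by auto
    qed
  qed
  have qrange: "0 \<le> q s \<and> q s \<le> pi" if s: "t0 \<le> s" "s \<le> t1" for s
  proof
    have "q t0 \<le> q s"
    proof (rule DERIV_nonneg_imp_increasing_open[OF s(1)])
      fix x assume x: "t0 < x" "x < s"
      then have "t0 < x" "x < t1" using s by auto
      then show "\<exists>y. (q has_real_derivative y) (at x) \<and> 0 \<le> y"
        using dq ppos less_imp_le by blast
    next
      show "continuous_on {t0..s} q" by (rule continuous_on_subset[OF cont]) (use s in auto)
    qed
    then show "0 \<le> q s" using q0 by simp
    have "q s \<le> q t1"
    proof (rule DERIV_nonneg_imp_increasing_open[OF s(2)])
      fix x assume x: "s < x" "x < t1"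
      then have "t0 < x" "x < t1" using s by auto
      then show "\<exists>y. (q has_real_derivative y) (at x) \<and> 0 \<le> y"
        using dq ppos less_imp_le by blast
    next
      show "continuous_on {s..t1} q" by (rule continuous_on_subset[OF cont]) (use s in auto)
    qed
    then show "q s \<le> pi" using q1 by simp
  qed
  define k where "k = sqrt \<sigma> / sqrt (2*e)"
  have Tu0: "t1 - t0 \<le> q t1 / sqrt (2*e) - q t0 / sqrt (2*e)"
  proof (rule time_upper[OF T cont dq, where g="\<lambda>x. 1 / sqrt (2*e)"])
    show "((\<lambda>x. x / sqrt (2*e)) has_real_derivative 1 / sqrt (2*e)) (at x)" for x
      using DERIV_cdivide[OF DERIV_ident, of "sqrt (2*e)"] by simp
    fix s assume s: "t0 < s" "s < t1"
    have "sqrt (2*e) \<le> qd s"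
      using en[OF s] ppos[OF s] \<sigma> by (intro real_le_lsqrt) (auto simp: mult_nonneg_nonneg)
    then show "1 \<le> 1 / sqrt (2*e) * qd s" using epos by (simp add: field_simps)
  qed
  have Tl: "arsinh (k * q t1) / sqrt \<sigma> - arsinh (k * q t0) / sqrt \<sigma> \<le> t1 - t0"
  proof (rule time_lower[OF T cont dq, where g="\<lambda>x. k / (sqrt \<sigma> * sqrt ((k*x)^2 + 1))"])
    show "((\<lambda>x. arsinh (k*x) / sqrt \<sigma>) has_real_derivative k / (sqrt \<sigma> * sqrt ((k*x)^2 + 1))) (at x)" for x
    proof -
      have "((\<lambda>x. arsinh (k*x) / sqrt \<sigma>) has_real_derivative (1 / sqrt ((k*x)^2 + 1) * (k * 1)) / sqrt \<sigma>) (at x)"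
        using DERIV_cdivide[OF DERIV_chain2[OF arsinh_real_has_field_derivative DERIV_cmult[OF DERIV_ident]], of k "sqrt \<sigma>" x] by simp
      then show ?thesis by (simp add: field_simps)
    qed
    fix s assume s: "t0 < s" "s < t1"
    have "(qd s)^2 \<le> 2*e + \<sigma> * (q s)^2"
    proof -
      have "\<sigma> * (2 * (1 - cos (q s))) \<le> \<sigma> * (q s)^2"
        using one_minus_cos_le[of "q s"] \<sigma> by (intro mult_left_mono) auto
      then show ?thesis using en[OF s] by (simp add: algebra_simps)
    qed
    then show "k / (sqrt \<sigma> * sqrt ((k * q s)^2 + 1)) * qd s \<le> 1"
      using alg_lower[OF epos \<sigma> ppos[OF s]] unfolding k_def by simp
  qed
  have Tu: "t1 - t0 \<le> (arsinh (k * q t1) + (q t1)^2/12) / sqrt \<sigma> - (arsinh (k * q t0) + (q t0)^2/12) / sqrt \<sigma>"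
  proof (rule time_upper[OF T cont dq, where g="\<lambda>x. (k / sqrt ((k*x)^2 + 1) + x/6) / sqrt \<sigma>"])
    show "((\<lambda>x. (arsinh (k*x) + x^2/12) / sqrt \<sigma>) has_real_derivative (k / sqrt ((k*x)^2 + 1) + x/6) / sqrt \<sigma>) (at x)" for x
    proof -
      have d1: "((\<lambda>x. arsinh (k*x)) has_real_derivative 1 / sqrt ((k*x)^2 + 1) * (k * 1)) (at x)"
        by (rule DERIV_chain2[OF arsinh_real_has_field_derivative DERIV_cmult[OF DERIV_ident]])
      have d2: "((\<lambda>x. x^2/12) has_real_derivative (2*x)/12) (at x)"
        by (auto intro!: derivative_eq_intros)
      have "((\<lambda>x. (arsinh (k*x) + x^2/12) / sqrt \<sigma>) has_real_derivative (1 / sqrt ((k*x)^2 + 1) * (k * 1) + (2*x)/12) / sqrt \<sigma>) (at x)"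
        by (rule DERIV_cdivide[OF DERIV_add[OF d1 d2]])
      then show ?thesis by (simp add: field_simps)
    qed
    fix s assume s: "t0 < s" "s < t1"
    have x: "0 \<le> q s" "q s \<le> pi" using qrange[of s] s by auto
    have "(qd s)^2 \<ge> 2*e + \<sigma> * (q s)^2 - \<sigma> * (q s)^4/12"
    proof -
      have "\<sigma> * ((q s)^2 - (q s)^4/12) \<le> \<sigma> * (2 * (1 - cos (q s)))"
        using cos_upper4[OF x(1)] \<sigma> by (intro mult_left_mono) auto
      then show ?thesis using en[OF s] by (simp add: algebra_simps)
    qed
    then show "1 \<le> (k / sqrt ((k * q s)^2 + 1) + q s/6) / sqrt \<sigma> * qd s"
      using alg_upper[OF epos \<sigma> ppos[OF s] x] unfolding k_def by simp
  qed
  define y where "y = k * pi"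
  define \<tau> where "\<tau> = sqrt \<sigma> * (t1 - t0)"
  have sq: "sqrt \<sigma> > 0" "sqrt (2*e) > 0" using \<sigma> epos by auto
  have "pi < sqrt \<sigma> * (pi / sqrt (2*e))"
  proof -
    have "t1 - t0 \<le> pi / sqrt (2*e)" using Tu0 q0 q1 by simp
    then have "sqrt \<sigma> * (t1 - t0) \<le> sqrt \<sigma> * (pi / sqrt (2*e))" using sq by (intro mult_left_mono) auto
    then show ?thesis using slow by linarith
  qed
  then have "sqrt (2*e) < sqrt \<sigma>" using sq by (simp add: field_simps)
  then have k1: "k > 1" unfolding k_def using sq by simp
  then have y1: "y \<ge> 1" unfolding y_def using pi_ge_two mult_mono[of 1 k 1 pi] by simp
  have k2: "k^2 = \<sigma> / (2*e)" unfolding k_def using \<sigma> epos by (simp add: power_divide)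
  have y2: "y^2 = pi^2 * \<sigma> / (2*e)" unfolding y_def using k2 by (simp add: power_mult_distrib)
  have ar: "arsinh y = ln (y + sqrt (y^2 + 1))" by (rule arsinh_real_def)
  have L1: "2*y \<le> y + sqrt (y^2 + 1)" using real_le_rsqrt[of y "y^2+1"] by simp
  have L2: "y + sqrt (y^2 + 1) \<le> 3*y"
  proof -
    have "y^2 + 1 \<le> (2*y)^2" proof -
      have "1 \<le> y^2" using y1 by (simp add: one_le_power)
      then show ?thesis by (simp add: power_mult_distrib)
    qed
    then have "sqrt (y^2+1) \<le> 2*y" using y1 by (intro real_le_lsqrt) auto
    then show ?thesis by simp
  qed
  have tl: "ln (2*y) \<le> \<tau>"
  proof -
    have "arsinh y \<le> \<tau>" using Tl q0 q1 sq unfolding \<tau>_def y_def by (simp add: field_simps)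
    moreover have "ln (2*y) \<le> arsinh y" unfolding ar using L1 y1 by (subst ln_le_cancel_iff) auto
    ultimately show ?thesis by simp
  qed
  have tu: "\<tau> \<le> ln (3*y) + pi^2/12"
  proof -
    have "\<tau> \<le> arsinh y + pi^2/12" using Tu q0 q1 sq unfolding \<tau>_def y_def by (simp add: field_simps)
    moreover have "arsinh y \<le> ln (3*y)" unfolding ar using L2 y1 arsinh_real_aux[of y]
      by (subst ln_le_cancel_iff) auto
    ultimately show ?thesis by simp
  qed
  have E1: "exp (2*\<tau>) \<ge> 4*y^2"
  proof -
    have "2*y \<le> exp \<tau>" using tl y1 by (metis exp_ln exp_le_cancel_iff mult_pos_pos zero_less_numeral less_le_trans zero_less_one)
    then have "(2*y)^2 \<le> (exp \<tau>)^2" using y1 by (intro power_mono) auto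
    then show ?thesis by (simp add: power_mult_distrib exp_double[symmetric] power2_eq_square[of "exp \<tau>"] mult_exp_exp)
  qed
  have E2: "exp (2*\<tau>) \<le> 9*y^2 * exp (pi^2/6)"
  proof -
    have "exp \<tau> \<le> exp (ln (3*y) + pi^2/12)" using tu by simp
    also have "\<dots> = 3*y * exp (pi^2/12)" using y1 by (simp add: exp_add)
    finally have "(exp \<tau>)^2 \<le> (3*y * exp (pi^2/12))^2" by (intro power_mono) auto
    moreover have "(exp \<tau>)^2 = exp (2*\<tau>)" by (simp add: power2_eq_square mult_exp_exp)
    moreover have "(exp (pi^2/12))^2 = exp (pi^2/6)" by (simp add: power2_eq_square mult_exp_exp)
    ultimately show ?thesis by (simp add: power_mult_distrib)
  qed
  have ee: "exp (-2 * sqrt \<sigma> * (t1-t0)) = 1 / exp (2*\<tau>)" unfolding \<tau>_def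
    using exp_minus[of "2 * (sqrt \<sigma> * (t1 - t0))"] by (simp add: inverse_eq_divide mult.assoc)
  have "pendulum_hamiltonian \<sigma> (q t) (qd t) = e" unfolding e_def H_def ..
  moreover have "2*pi^2 * \<sigma> * (1 / exp (2*\<tau>)) \<le> e"
  proof -
    have "2*pi^2*\<sigma> = e * (4*y^2)" unfolding y2 using epos by (simp add: field_simps)
    also have "\<dots> \<le> e * exp (2*\<tau>)" using E1 epos by (intro mult_left_mono) auto
    finally show ?thesis by (simp add: field_simps)
  qed
  moreover have "e \<le> (9*pi^2/2)*exp (pi^2/6) * \<sigma> * (1 / exp (2*\<tau>))"
  proof -
    have "e * exp (2*\<tau>) \<le> e * (9*y^2 * exp (pi^2/6))" using E2 epos by (intro mult_left_mono) auto
    also have "\<dots> = (9*pi^2/2)*exp (pi^2/6) * \<sigma>" unfolding y2 using epos by (simp add: field_simps)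
    finally show ?thesis by (simp add: field_simps)
  qed
  ultimately show ?thesis unfolding ee by simp
qed

theorem lemma2p2:
  fixes a \<epsilon> :: real
  assumes "a > 0" and "\<epsilon> > 0"
  shows "\<exists>C > 0. \<exists>C' > 1. \<forall>(n::nat) (t0::real) (t1::real) (q::real \<Rightarrow> real) (qd::real \<Rightarrow> real).
    n \<ge> 1 \<and> t0 < t1 \<and>
    pendulum_EL_solution (sigma_n a n) q qd t0 t1 \<and> q t0 = 0 \<and> q t1 = pi \<and>
    \<bar>pi / (t1 - t0)\<bar> < real n powr (- a / 2 - \<epsilon>)
    \<longrightarrow> (\<forall>t\<in>{t0<..<t1}.
          let e = pendulum_hamiltonian (sigma_n a n) (q t) (qd t);
              \<omega> = pi / (t1 - t0);
              g = sigma_n a n * exp (- C * sqrt (sigma_n a n) / \<bar>\<omega>\<bar>)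
          in g / C' < e \<and> e < C' * g)"
proof (rule exI[of _ "2*pi"], rule conjI, simp, rule exI[of _ 1000], rule conjI, simp, intro allI impI ballI)
  fix n :: nat and t0 t1 :: real and q qd :: "real \<Rightarrow> real" and t
  assume H: "1 \<le> n \<and> t0 < t1 \<and> pendulum_EL_solution (sigma_n a n) q qd t0 t1 \<and> q t0 = 0 \<and> q t1 = pi \<and>
    \<bar>pi / (t1 - t0)\<bar> < real n powr (- a / 2 - \<epsilon>)"
  assume t: "t \<in> {t0<..<t1}"
  define \<sigma> where "\<sigma> = sigma_n a n"
  have n1: "1 \<le> real n" using H by simp
  have \<sigma>pos: "\<sigma> > 0" unfolding \<sigma>_def sigma_n_def using n1 by simp
  have sq: "sqrt \<sigma> = real n powr (-a/2)"
  proof -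
    have "sqrt \<sigma> = \<sigma> powr (1/2)" using \<sigma>pos by (simp add: powr_half_sqrt)
    also have "\<dots> = real n powr (-a/2)" unfolding \<sigma>_def sigma_n_def by (simp add: powr_powr)
    finally show ?thesis .
  qed
  have T: "t0 < t1" using H by simp
  have "pi / (t1 - t0) < sqrt \<sigma>"
  proof -
    have "real n powr (- a / 2 - \<epsilon>) \<le> real n powr (-a/2)" using n1 assms by (intro powr_mono) auto
    then show ?thesis using H T sq by simp
  qed
  then have slow: "pi < sqrt \<sigma> * (t1 - t0)" using T by (simp add: field_simps)
  have c: "2*pi^2 * \<sigma> * exp (-2 * sqrt \<sigma> * (t1-t0)) \<le> pendulum_hamiltonian \<sigma> (q t) (qd t)
     \<and> pendulum_hamiltonian \<sigma> (q t) (qd t) \<le> (9*pi^2/2)*exp (pi^2/6) * \<sigma> * exp (-2 * sqrt \<sigma> * (t1-t0))"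
    using core[OF \<sigma>pos T _ _ _ slow t] H unfolding \<sigma>_def by blast
  define g where "g = \<sigma> * exp (-2 * sqrt \<sigma> * (t1-t0))"
  have gpos: "g > 0" unfolding g_def using \<sigma>pos by simp
  have geq: "sigma_n a n * exp (- (2*pi) * sqrt (sigma_n a n) / \<bar>pi / (t1 - t0)\<bar>) = g"
    unfolding g_def \<sigma>_def using T by (simp add: field_simps)
  define e where "e = pendulum_hamiltonian \<sigma> (q t) (qd t)"
  have pi2: "pi^2 \<le> 10"
  proof -
    have "pi * pi \<le> 3.1416 * 3.1416" using pi_approx(2) by (intro mult_mono) auto
    then show ?thesis by (simp add: power2_eq_square)
  qed
  have K: "(9*pi^2/2)*exp (pi^2/6) < 1000"
  proof -
    have "exp (pi^2/6) \<le> exp 2" using pi2 by simp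
    also have "exp (2::real) = exp 1 * exp 1" by (simp add: mult_exp_exp)
    also have "\<dots> \<le> 3 * 3" using exp_le by (intro mult_mono) auto
    finally have "exp (pi^2/6) \<le> 9" by simp
    then have "(9*pi^2/2)*exp (pi^2/6) \<le> (9*10/2) * 9" using pi2 by (intro mult_mono) auto
    then show ?thesis by simp
  qed
  have lo: "g / 1000 < e"
  proof -
    have "1 < pi^2 * 2000"
      using pi_ge_two power_mono[of 2 pi 2] by simp
    then have "g / 1000 < 2*pi^2 * g" using gpos by (simp add: field_simps)
    also have "\<dots> \<le> e" using c unfolding e_def g_def by (simp add: mult.assoc)
    finally show ?thesis .
  qed
  have hi: "e < 1000 * g"
  proof -
    have "e \<le> (9*pi^2/2)*exp (pi^2/6) * g" using c unfolding e_def g_def by (simp add: mult.assoc)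
    also have "\<dots> < 1000 * g" using K gpos by (intro mult_strict_right_mono) auto
    finally show ?thesis .
  qed
  show "let e = pendulum_hamiltonian (sigma_n a n) (q t) (qd t); \<omega> = pi / (t1 - t0);
          g = sigma_n a n * exp (- (2*pi) * sqrt (sigma_n a n) / \<bar>\<omega>\<bar>) in g / 1000 < e \<and> e < 1000 * g"
    unfolding Let_def geq using lo hi unfolding e_def \<sigma>_def by simp
qed

end
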